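(* Let $A\in\mathbb{R}^{m\times n}$, $b\in\mathbb{R}^m$, $1\le k\le n$, and let $p$ be an LPM polynomial of degree $k$ on $n\times n$ symmetric matrices with nonnegative coefficients such that $p(A^{\intercal}A)\neq 0$. Consider the sparse QCQP with $A_1=A^{\intercal}A$ and $A_0=A^{\intercal}bb^{\intercal}A$ (i.e. maximize $x^{\intercal}A^{\intercal}bb^{\intercal}Ax$ subject to $x^{\intercal}A^{\intercal}Ax=1$, $|\mathrm{supp}(x)|\le k$). Then the largest real root $\eta_p$ of the univariate polynomial $t\mapsto p(A^{\intercal}A\,t-A^{\intercal}bb^{\intercal}A)$ equals $$\eta_p=\frac{p(A^{\intercal}(I+bb^{\intercal})A)}{p(A^{\intercal}A)}-1.$$
   Context: An LPM polynomial of degree $k$ is a polynomial in a symmetric $n\times n$ matrix $X$, not identically zero, of the form $p(X)=\sum_{S\subseteq[n],|S|=k}a_S\det(X|_S)$, where $X|_S$ is the principal submatrix indexed by $S$. $\mathrm{supp}(x)=\{i:x_i\ne0\}$. *)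

theory Defs
  imports "Jordan_Normal_Form.Determinant" "Jordan_Normal_Form.DL_Submatrix"
begin

definition ksubsets :: "nat \<Rightarrow> nat \<Rightarrow> nat set set" where
  "ksubsets n k = {S. S \<subseteq> {0..<n} \<and> card S = k}"

definition lpm_eval :: "nat \<Rightarrow> nat \<Rightarrow> (nat set \<Rightarrow> real) \<Rightarrow> real mat \<Rightarrow> real" where
  "lpm_eval n k a X = (\<Sum>S\<in>ksubsets n k. a S * det (submatrix X S S))"

text \<open>The coefficient family a defines an LPM polynomial of degree k
  (not identically zero; the k x k principal minors are linearly independent).\<close>
definition is_lpm :: "nat \<Rightarrow> nat \<Rightarrow> (nat set \<Rightarrow> real) \<Rightarrow> bool" where
  "is_lpm n k a \<longleftrightarrow> (\<exists>S\<in>ksubsets n k. a S \<noteq> 0)"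

definition outer :: "real vec \<Rightarrow> real mat" where
  "outer b = mat (dim_vec b) (dim_vec b) (\<lambda>(i,j). b $ i * b $ j)"

definition is_largest_real_root :: "(real \<Rightarrow> real) \<Rightarrow> real \<Rightarrow> bool" where
  "is_largest_real_root q r \<longleftrightarrow> q r = 0 \<and> (\<forall>t. q t = 0 \<longrightarrow> t \<le> r)"

end

theory Submission
  imports Defs "Jordan_Normal_Form.Char_Poly"
begin

lemma row_affine:
  fixes Y R :: "real mat"
  assumes Y: "Y \<in> carrier_mat k k" and R: "R \<in> carrier_mat k k" and r: "r < k"
    and z: "\<And>i j. i < k \<Longrightarrow> j < k \<Longrightarrow> i \<noteq> r \<Longrightarrow> R $$ (i,j) = 0"
  shows "det (Y + s \<cdot>\<^sub>m R) = det Y + s * (\<Sum>j<k. R $$ (r,j) * cofactor Y r j)"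
proof -
  have md: "mat_delete (Y + s \<cdot>\<^sub>m R) r j = mat_delete Y r j" if j: "j < k" for j
  proof (rule eq_matI)
    fix i' j' assume "i' < dim_row (mat_delete Y r j)" "j' < dim_col (mat_delete Y r j)"
    then have i': "i' < k - 1" and j': "j' < k - 1" using Y by auto
    then have b: "i' < k" "Suc i' < k" "j' < k" "Suc j' < k" by auto
    show "mat_delete (Y + s \<cdot>\<^sub>m R) r j $$ (i', j') = mat_delete Y r j $$ (i', j')"
      unfolding mat_delete_def using Y R i' j' b r z[of "if i' < r then i' else Suc i'" "if j' < j then j' else Suc j'"]
      by auto
  qed (use Y R in auto)
  have YR: "Y + s \<cdot>\<^sub>m R \<in> carrier_mat k k" using Y R by auto
  have "det (Y + s \<cdot>\<^sub>m R) = (\<Sum>j<k. (Y + s \<cdot>\<^sub>m R) $$ (r,j) * cofactor (Y + s \<cdot>\<^sub>m R) r j)"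
    by (rule laplace_expansion_row[OF YR r])
  also have "\<dots> = (\<Sum>j<k. (Y $$ (r,j) + s * R $$ (r,j)) * cofactor Y r j)"
  proof (rule sum.cong[OF refl])
    fix j assume "j \<in> {..<k}"
    then have j: "j < k" by auto
    have "(Y + s \<cdot>\<^sub>m R) $$ (r,j) = Y $$ (r,j) + s * R $$ (r,j)" using Y R r j by auto
    moreover have "cofactor (Y + s \<cdot>\<^sub>m R) r j = cofactor Y r j" unfolding cofactor_def using md[OF j] by simp
    ultimately show "(Y + s \<cdot>\<^sub>m R) $$ (r,j) * cofactor (Y + s \<cdot>\<^sub>m R) r j = (Y $$ (r,j) + s * R $$ (r,j)) * cofactor Y r j" by simp
  qed
  also have "\<dots> = (\<Sum>j<k. Y $$ (r,j) * cofactor Y r j) + s * (\<Sum>j<k. R $$ (r,j) * cofactor Y r j)"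
    by (simp add: algebra_simps sum.distrib sum_distrib_left)
  also have "(\<Sum>j<k. Y $$ (r,j) * cofactor Y r j) = det Y"
    by (rule laplace_expansion_row[OF Y r, symmetric])
  finally show ?thesis .
qed

lemma outer_carrier[simp]: "w \<in> carrier_vec k \<Longrightarrow> outer w \<in> carrier_mat k k"
  unfolding outer_def by auto

lemma outer_index[simp]: "i < dim_vec w \<Longrightarrow> j < dim_vec w \<Longrightarrow> outer w $$ (i,j) = w $ i * w $ j"
  unfolding outer_def by auto

lemma rank1_affine_ex:
  fixes G :: "real mat" and w :: "real vec"
  assumes G: "G \<in> carrier_mat k k" and w: "w \<in> carrier_vec k"
  shows "\<exists>c. \<forall>s. det (G + s \<cdot>\<^sub>m outer w) = det G + s * c"
proof (cases "w = 0\<^sub>v k")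
  case True
  have "G + s \<cdot>\<^sub>m outer w = G" for s
    by (rule eq_matI, insert G w True, auto simp: outer_def)
  then show ?thesis by auto
next
  case False
  then obtain r where r: "r < k" and wr: "w $ r \<noteq> 0" using w by (metis eq_vecI carrier_vecD index_zero_vec)
  define U where "U = mat k k (\<lambda>(i,j). if j = r \<and> i \<noteq> r then w $ i / w $ r else 0)"
  define E where "E = 1\<^sub>m k - U"
  define E' where "E' = 1\<^sub>m k + U"
  define Om where "Om = outer w"
  define R where "R = mat k k (\<lambda>(i,j). if i = r then w $ r * w $ j else 0)"
  have U: "U \<in> carrier_mat k k" unfolding U_def by auto
  have E: "E \<in> carrier_mat k k" and E': "E' \<in> carrier_mat k k" unfolding E_def E'_def using U by auto
  have Om: "Om \<in> carrier_mat k k" unfolding Om_def using w by auto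
  have R: "R \<in> carrier_mat k k" unfolding R_def by auto
  have UU: "U * U = 0\<^sub>m k k"
  proof (rule eq_matI)
    fix i j assume ij: "i < dim_row (0\<^sub>m k k)" "j < dim_col (0\<^sub>m k k)"
    have "(U * U) $$ (i,j) = (\<Sum>l<k. U $$ (i,l) * U $$ (l,j))"
      using ij U by (auto simp: scalar_prod_def row_def col_def intro!: sum.cong)
    also have "\<dots> = 0"
      by (rule sum.neutral, auto simp: U_def ij[simplified])
    finally show "(U * U) $$ (i,j) = 0\<^sub>m k k $$ (i,j)" using ij by simp
  qed (use U in auto)
  have "E * E' = 1\<^sub>m k * E' - U * E'" unfolding E_def
    by (rule minus_mult_distrib_mat[OF _ U E'], auto)
  also have "\<dots> = 1\<^sub>m k"
  proof -
    have "U * E' = U * 1\<^sub>m k + U * U" unfolding E'_def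
      by (rule mult_add_distrib_mat[OF U], insert U, auto)
    then have "U * E' = U" using UU U by auto
    then show ?thesis using E' U unfolding E'_def by (auto intro!: eq_matI)
  qed
  finally have "E * E' = 1\<^sub>m k" .
  then have "det E * det E' = 1" using det_mult[OF E E'] by simp
  then have dE: "det E \<noteq> 0" by auto
  have EOm: "E * Om = R"
  proof -
    have "E * Om = 1\<^sub>m k * Om - U * Om" unfolding E_def
      by (rule minus_mult_distrib_mat[OF _ U Om], auto)
    moreover have "(U * Om) $$ (i,j) = (if i \<noteq> r then w $ i * w $ j else 0)" if ij: "i < k" "j < k" for i j
    proof -
      have "(U * Om) $$ (i,j) = (\<Sum>l<k. U $$ (i,l) * Om $$ (l,j))"
        using ij U Om by (auto simp: scalar_prod_def row_def col_def intro!: sum.cong)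
      also have "\<dots> = (\<Sum>l<k. if l = r then (if i \<noteq> r then w $ i / w $ r * (w $ r * w $ j) else 0) else 0)"
        using w r ij by (intro sum.cong, auto simp: U_def Om_def)
      also have "\<dots> = (if i \<noteq> r then w $ i / w $ r * (w $ r * w $ j) else 0)"
        using r by (simp add: sum.delta')
      also have "\<dots> = (if i \<noteq> r then w $ i * w $ j else 0)" using wr by auto
      finally show ?thesis .
    qed
    moreover have "Om $$ (i,j) = w $ i * w $ j" if ij: "i < k" "j < k" for i j
      using ij w unfolding Om_def by auto
    ultimately show ?thesis using Om U R w unfolding R_def
      by (intro eq_matI, auto)
  qed
  have EGR: "E * (G + s \<cdot>\<^sub>m Om) = E * G + s \<cdot>\<^sub>m R" for s
  proof -
    have "E * (G + s \<cdot>\<^sub>m Om) = E * G + E * (s \<cdot>\<^sub>m Om)"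
      by (rule mult_add_distrib_mat[OF E G], insert Om, auto)
    also have "E * (s \<cdot>\<^sub>m Om) = s \<cdot>\<^sub>m (E * Om)" by (rule mult_smult_distrib[OF E Om])
    finally show ?thesis using EOm by simp
  qed
  have EG: "E * G \<in> carrier_mat k k" using E G by auto
  define c1 where "c1 = (\<Sum>j<k. R $$ (r,j) * cofactor (E * G) r j)"
  have Rz: "\<And>i j. i < k \<Longrightarrow> j < k \<Longrightarrow> i \<noteq> r \<Longrightarrow> R $$ (i,j) = 0" unfolding R_def by auto
  have key: "det E * det (G + s \<cdot>\<^sub>m Om) = det E * det G + s * c1" for s
  proof -
    have "det E * det (G + s \<cdot>\<^sub>m Om) = det (E * (G + s \<cdot>\<^sub>m Om))"
      by (rule det_mult[symmetric, OF E], insert G Om, auto)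
    also have "\<dots> = det (E * G) + s * c1" unfolding EGR c1_def
      by (rule row_affine[OF EG R r Rz])
    also have "det (E * G) = det E * det G" by (rule det_mult[OF E G])
    finally show ?thesis .
  qed
  show ?thesis
  proof (intro exI allI)
    fix s
    from key[of s] dE show "det (G + s \<cdot>\<^sub>m outer w) = det G + s * (c1 / det E)"
      unfolding Om_def by (auto simp: field_simps)
  qed
qed

lemma self_scalar_pos:
  fixes v :: "real vec"
  assumes v: "v \<in> carrier_vec k" and nz: "v \<noteq> 0\<^sub>v k"
  shows "0 < v \<bullet> v"
proof -
  obtain i where i: "i < k" "v $ i \<noteq> 0" using v nz by (metis eq_vecI carrier_vecD index_zero_vec)
  have "v \<bullet> v = (\<Sum>j\<in>{0..<k}. v $ j * v $ j)" using v unfolding scalar_prod_def by auto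
  also have "\<dots> > 0"
    by (rule sum_pos2[of _ i], use i in \<open>auto simp: zero_less_mult_iff linorder_neq_iff\<close>)
  finally show ?thesis .
qed

lemma psd_det_nonneg:
  fixes G :: "real mat"
  assumes G: "G \<in> carrier_mat k k" and psd: "\<And>x. x \<in> carrier_vec k \<Longrightarrow> 0 \<le> x \<bullet> (G *\<^sub>v x)"
  shows "0 \<le> det G"
proof -
  define p where "p = char_poly (-G)"
  have mG: "-G \<in> carrier_mat k k" using G by auto
  have pe: "poly p s = det (G + s \<cdot>\<^sub>m 1\<^sub>m k)" for s
  proof -
    have "poly p s = det (- char_matrix (- G) s)" unfolding p_def by (rule char_poly_matrix[OF mG])
    also have "- char_matrix (- G) s = G + s \<cdot>\<^sub>m 1\<^sub>m k"
      unfolding char_matrix_def using G by (intro eq_matI, auto)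
    finally show ?thesis .
  qed
  have nz: "poly p s \<noteq> 0" if s: "s > 0" for s
  proof
    assume "poly p s = 0"
    then have "det (G + s \<cdot>\<^sub>m 1\<^sub>m k) = 0" using pe by simp
    then obtain v where v: "v \<in> carrier_vec k" "v \<noteq> 0\<^sub>v k" "(G + s \<cdot>\<^sub>m 1\<^sub>m k) *\<^sub>v v = 0\<^sub>v k"
      using det_0_iff_vec_prod_zero[of "G + s \<cdot>\<^sub>m 1\<^sub>m k" k] G by auto
    have "(G + s \<cdot>\<^sub>m 1\<^sub>m k) *\<^sub>v v = G *\<^sub>v v + s \<cdot>\<^sub>v v"
    proof -
      have "(s \<cdot>\<^sub>m 1\<^sub>m k) *\<^sub>v v = s \<cdot>\<^sub>v v"
      proof (rule eq_vecI)
        fix i assume "i < dim_vec (s \<cdot>\<^sub>v v)"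
        then have i: "i < k" using v(1) by auto
        have "((s \<cdot>\<^sub>m 1\<^sub>m k) *\<^sub>v v) $ i = (\<Sum>j\<in>{0..<k}. (if j = i then s * v $ j else 0))"
          using i v(1) unfolding scalar_prod_def by (auto intro!: sum.cong)
        also have "\<dots> = s * v $ i" using i by (simp add: sum.delta')
        finally show "((s \<cdot>\<^sub>m 1\<^sub>m k) *\<^sub>v v) $ i = (s \<cdot>\<^sub>v v) $ i" using i v(1) by simp
      qed (use v(1) in auto)
      then show ?thesis using G v(1) by (simp add: add_mult_distrib_mat_vec[OF G _ v(1)])
    qed
    then have "G *\<^sub>v v + s \<cdot>\<^sub>v v = 0\<^sub>v k" using v(3) by simp
    then have "0 = v \<bullet> (G *\<^sub>v v + s \<cdot>\<^sub>v v)" using v(1) by simp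
    also have "\<dots> = v \<bullet> (G *\<^sub>v v) + s * (v \<bullet> v)"
      using v G by (simp add: scalar_prod_add_distrib[of _ k])
    also have "\<dots> > 0" using psd[OF v(1)] self_scalar_pos[OF v(1,2)] s
      by (simp add: add_nonneg_pos)
    finally show False by simp
  qed
  have lc: "lead_coeff p = 1" using degree_monic_char_poly[OF mG] unfolding p_def by simp
  obtain N where N: "\<forall>x\<ge>N. poly p x \<ge> lead_coeff p" using poly_pinfty_gt_lc[of p] lc by auto
  show ?thesis
  proof (rule ccontr)
    assume "\<not> 0 \<le> det G"
    moreover have "G + 0 \<cdot>\<^sub>m 1\<^sub>m k = G" using G by (intro eq_matI, auto)
    ultimately have "poly p 0 < 0" using pe[of 0] by simp
    moreover have "0 < poly p (max N 1)"
    proof -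
      have "lead_coeff p \<le> poly p (max N 1)" using N by auto
      then show ?thesis using lc by simp
    qed
    ultimately obtain x where "0 < x" "poly p x = 0"
      using poly_IVT_pos[of 0 "max N 1" p] by force
    then show False using nz by blast
  qed
qed

lemma rank1_affine:
  fixes G :: "real mat" and w :: "real vec"
  assumes G: "G \<in> carrier_mat k k" and w: "w \<in> carrier_vec k"
  shows "det (G + s \<cdot>\<^sub>m outer w) = det G + s * (det (G + outer w) - det G)"
proof -
  obtain c where c: "\<And>s. det (G + s \<cdot>\<^sub>m outer w) = det G + s * c"
    using rank1_affine_ex[OF G w] by auto
  have "G + 1 \<cdot>\<^sub>m outer w = G + outer w" using G w by (intro eq_matI, auto)
  then have "det (G + outer w) = det G + c" using c[of 1] by simp
  then show ?thesis using c[of s] by simp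
qed

lemma outer_mult_vec:
  fixes w x :: "real vec"
  assumes w: "w \<in> carrier_vec k" and x: "x \<in> carrier_vec k"
  shows "outer w *\<^sub>v x = (w \<bullet> x) \<cdot>\<^sub>v w"
proof (rule eq_vecI)
  fix i assume "i < dim_vec ((w \<bullet> x) \<cdot>\<^sub>v w)"
  then have i: "i < k" using w by auto
  have "(outer w *\<^sub>v x) $ i = (\<Sum>j\<in>{0..<k}. w $ i * (w $ j * x $ j))"
    using i w x unfolding outer_def by (auto simp: scalar_prod_def intro!: sum.cong)
  also have "\<dots> = w $ i * (w \<bullet> x)" using w x unfolding scalar_prod_def by (simp add: sum_distrib_left)
  finally show "(outer w *\<^sub>v x) $ i = ((w \<bullet> x) \<cdot>\<^sub>v w) $ i" using i w by simp
qed (use w in \<open>auto simp: outer_def\<close>)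

definition psd :: "nat \<Rightarrow> real mat \<Rightarrow> bool" where
  "psd k G \<longleftrightarrow> (\<forall>x\<in>carrier_vec k. 0 \<le> x \<bullet> (G *\<^sub>v x))"

lemma psd_add_outer:
  fixes G :: "real mat" and w :: "real vec"
  assumes G: "G \<in> carrier_mat k k" and w: "w \<in> carrier_vec k" and p: "psd k G" and s: "0 \<le> s"
  shows "psd k (G + s \<cdot>\<^sub>m outer w)"
  unfolding psd_def
proof
  fix x :: "real vec" assume x: "x \<in> carrier_vec k"
  have O: "outer w \<in> carrier_mat k k" using w by simp
  have "(G + s \<cdot>\<^sub>m outer w) *\<^sub>v x = G *\<^sub>v x + (s \<cdot>\<^sub>m outer w) *\<^sub>v x"
    by (rule add_mult_distrib_mat_vec[OF G _ x], use O in auto)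
  also have "(s \<cdot>\<^sub>m outer w) *\<^sub>v x = s \<cdot>\<^sub>v (outer w *\<^sub>v x)"
    using O x by (intro eq_vecI, auto simp: scalar_prod_def sum_distrib_left mult.assoc)
  also have "outer w *\<^sub>v x = (w \<bullet> x) \<cdot>\<^sub>v w" by (rule outer_mult_vec[OF w x])
  finally have e: "(G + s \<cdot>\<^sub>m outer w) *\<^sub>v x = G *\<^sub>v x + s \<cdot>\<^sub>v ((w \<bullet> x) \<cdot>\<^sub>v w)" .
  have "x \<bullet> (G *\<^sub>v x + s \<cdot>\<^sub>v ((w \<bullet> x) \<cdot>\<^sub>v w)) = x \<bullet> (G *\<^sub>v x) + s * ((w \<bullet> x) * (x \<bullet> w))"
    using x w G by (simp add: scalar_prod_add_distrib[of _ k])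
  also have "x \<bullet> w = w \<bullet> x" by (rule comm_scalar_prod[OF x w])
  finally have "x \<bullet> ((G + s \<cdot>\<^sub>m outer w) *\<^sub>v x) = x \<bullet> (G *\<^sub>v x) + s * ((w \<bullet> x) * (w \<bullet> x))"
    using e by simp
  moreover have "0 \<le> x \<bullet> (G *\<^sub>v x)" using p x unfolding psd_def by auto
  ultimately show "0 \<le> x \<bullet> ((G + s \<cdot>\<^sub>m outer w) *\<^sub>v x)" using s by simp
qed

lemma block_facts:
  fixes G :: "real mat" and w :: "real vec"
  assumes G: "G \<in> carrier_mat k k" and w: "w \<in> carrier_vec k" and p: "psd k G" and k: "1 \<le> k"
  shows "0 \<le> det G" "0 \<le> det (G + outer w) - det G"
    "det (t \<cdot>\<^sub>m G - outer w) = t ^ k * det G - t ^ (k - 1) * (det (G + outer w) - det G)"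
proof -
  define c where "c = det (G + outer w) - det G"
  have O: "outer w \<in> carrier_mat k k" using w by simp
  have aff: "det (G + s \<cdot>\<^sub>m outer w) = det G + s * c" for s
    unfolding c_def by (rule rank1_affine[OF G w])
  have nn: "0 \<le> det (G + s \<cdot>\<^sub>m outer w)" if "0 \<le> s" for s
    using psd_add_outer[OF G w p that] G O unfolding psd_def by (intro psd_det_nonneg[of _ k], auto)
  show "0 \<le> det G" using p G unfolding psd_def by (intro psd_det_nonneg[of _ k], auto)
  show "0 \<le> det (G + outer w) - det G"
  proof (rule ccontr)
    assume "\<not> ?thesis"
    then have cn: "c < 0" unfolding c_def by simp
    define s where "s = (det G + 1) / (- c)"
    have "0 \<le> det G" using p G unfolding psd_def by (intro psd_det_nonneg[of _ k], auto)
    then have s0: "0 \<le> s" unfolding s_def using cn by (auto intro: divide_nonneg_neg)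
    have "det G + s * c = -1" unfolding s_def using cn by (auto simp: field_simps)
    then show False using nn[OF s0] aff[of s] by simp
  qed
  show "det (t \<cdot>\<^sub>m G - outer w) = t ^ k * det G - t ^ (k - 1) * (det (G + outer w) - det G)"
  proof (cases "t = 0")
    case False
    have "t \<cdot>\<^sub>m G - outer w = t \<cdot>\<^sub>m (G + (- 1 / t) \<cdot>\<^sub>m outer w)"
      using G O False by (intro eq_matI, auto simp: field_simps)
    then have "det (t \<cdot>\<^sub>m G - outer w) = t ^ k * (det G + (- 1 / t) * c)"
      using aff[of "-1/t"] G O by simp
    also have "\<dots> = t ^ k * det G - t ^ (k - 1) * c"
    proof -
      have "t ^ k = t * t ^ (k - 1)" using k by (metis Suc_diff_le diff_Suc_1 power_Suc)
      then show ?thesis using False by (simp add: field_simps)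
    qed
    finally show ?thesis unfolding c_def .
  next
    case True
    show ?thesis
    proof (cases "k = 1")
      case True
      have d1: "det (0 \<cdot>\<^sub>m G - outer w) = - (w $ 0 * w $ 0)"
        using G w O \<open>k = 1\<close> by (subst det_single, auto simp: outer_def)
      have d2: "det (G + outer w) = G $$ (0,0) + w $ 0 * w $ 0"
        using G w O \<open>k = 1\<close> by (subst det_single, auto simp: outer_def)
      have d3: "det G = G $$ (0,0)" using G \<open>k = 1\<close> by (subst det_single, auto)
      show ?thesis using d1 d2 d3 \<open>t = 0\<close> \<open>k = 1\<close> by simp
    next
      case False
      then have k2: "2 \<le> k" using k by simp
      have Z: "0\<^sub>m k k \<in> carrier_mat k k" by simp
      have dz: "det (0\<^sub>m k k) = 0" using k by simp
      have "det (0\<^sub>m k k + 2 \<cdot>\<^sub>m outer w) = det (0\<^sub>m k k) + 2 * (det (0\<^sub>m k k + outer w) - det (0\<^sub>m k k))"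
        by (rule rank1_affine[OF Z w])
      moreover have "0\<^sub>m k k + 2 \<cdot>\<^sub>m outer w = 2 \<cdot>\<^sub>m outer w" using O by (intro eq_matI, auto)
      moreover have "0\<^sub>m k k + outer w = outer w" using O by (intro eq_matI, auto)
      ultimately have "2 ^ k * det (outer w) = 2 * det (outer w)" using dz O by simp
      moreover have "(2::real) ^ k \<noteq> 2"
      proof -
        have "(2::real) ^ 2 \<le> 2 ^ k" using k2 by (rule power_increasing, simp)
        then show ?thesis by auto
      qed
      ultimately have d0: "det (outer w) = 0" by auto
      have "0 \<cdot>\<^sub>m G - outer w = (-1) \<cdot>\<^sub>m outer w" using G O by (intro eq_matI, auto)
      then have "det (0 \<cdot>\<^sub>m G - outer w) = 0" using d0 O by simp
      moreover have "t ^ k * det G - t ^ (k - 1) * (det (G + outer w) - det G) = 0"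
        using k2 \<open>t = 0\<close> by (simp add: power_0_left)
      ultimately show ?thesis using \<open>t = 0\<close> by simp
    qed
  qed
qed

lemma psd_gram:
  fixes C :: "real mat"
  assumes C: "C \<in> carrier_mat m k"
  shows "psd k (transpose_mat C * C)"
  unfolding psd_def
proof
  fix x :: "real vec" assume x: "x \<in> carrier_vec k"
  have Cx: "C *\<^sub>v x \<in> carrier_vec m" using C x by auto
  have "x \<bullet> ((transpose_mat C * C) *\<^sub>v x) = x \<bullet> (transpose_mat C *\<^sub>v (C *\<^sub>v x))"
    using C x by simp
  also have "\<dots> = (transpose_mat C *\<^sub>v (C *\<^sub>v x)) \<bullet> x"
    by (rule comm_scalar_prod[OF x], use C x in auto)
  also have "\<dots> = (C *\<^sub>v x) \<bullet> (C *\<^sub>v x)"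
    by (rule transpose_vec_mult_scalar[OF C x Cx])
  also have "\<dots> \<ge> 0" unfolding scalar_prod_def by (rule sum_nonneg, simp)
  finally show "0 \<le> x \<bullet> ((transpose_mat C * C) *\<^sub>v x)" .
qed

lemma card_ksub:
  assumes "S \<in> ksubsets n k" shows "card {i. i < n \<and> i \<in> S} = k"
proof -
  have "{i. i < n \<and> i \<in> S} = S" using assms unfolding ksubsets_def by auto
  then show ?thesis using assms unfolding ksubsets_def by simp
qed

context
  fixes S :: "nat set" and n k :: nat
  assumes hS: "card {i. i < n \<and> i \<in> S} = k"
begin

lemma pickS: "i < k \<Longrightarrow> pick S i < n"
  using pick_le[of i n S] hS by auto

lemma sub_carrier: "X \<in> carrier_mat n n \<Longrightarrow> submatrix X S S \<in> carrier_mat k k"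
  unfolding submatrix_def using hS by auto

lemma sub_idx: "X \<in> carrier_mat n n \<Longrightarrow> i < k \<Longrightarrow> j < k \<Longrightarrow> submatrix X S S $$ (i,j) = X $$ (pick S i, pick S j)"
  by (rule submatrix_index, use hS in auto)

lemma sub_add: assumes X: "X \<in> carrier_mat n n" and Y: "Y \<in> carrier_mat n n"
  shows "submatrix (X + Y) S S = submatrix X S S + submatrix Y S S"
proof -
  have c: "submatrix X S S \<in> carrier_mat k k" "submatrix Y S S \<in> carrier_mat k k"
    "submatrix (X + Y) S S \<in> carrier_mat k k" using X Y by (auto intro!: sub_carrier)
  show ?thesis
    by (rule eq_matI, use c X Y in \<open>auto simp: sub_idx pickS\<close>)
qed

lemma sub_lin: assumes X: "X \<in> carrier_mat n n" and Y: "Y \<in> carrier_mat n n"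
  shows "submatrix (t \<cdot>\<^sub>m X - Y) S S = t \<cdot>\<^sub>m submatrix X S S - submatrix Y S S"
proof -
  have c: "submatrix X S S \<in> carrier_mat k k" "submatrix Y S S \<in> carrier_mat k k"
    "submatrix (t \<cdot>\<^sub>m X - Y) S S \<in> carrier_mat k k" using X Y by (auto intro!: sub_carrier)
  have XY: "t \<cdot>\<^sub>m X - Y \<in> carrier_mat n n" using X Y by auto
  show ?thesis
    by (rule eq_matI, use c X Y in \<open>auto simp: sub_idx[OF XY] sub_idx[OF X] sub_idx[OF Y] pickS\<close>)
qed

lemma sub_outer: assumes w: "(w :: real vec) \<in> carrier_vec n"
  shows "submatrix (outer w) S S = outer (vec k (\<lambda>i. w $ pick S i))"
proof -
  have c: "submatrix (outer w) S S \<in> carrier_mat k k" using w by (auto intro!: sub_carrier)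
  show ?thesis
    by (rule eq_matI, use c w in \<open>auto simp: sub_idx pickS outer_def\<close>)
qed

lemma sub_gram: "(A :: real mat) \<in> carrier_mat m n \<Longrightarrow>
   submatrix (transpose_mat A * A) S S = transpose_mat (submatrix A UNIV S) * submatrix A UNIV S"
proof -
  assume A: "A \<in> carrier_mat m n"
  have dB: "dim_row (submatrix A UNIV S) = m" "dim_col (submatrix A UNIV S) = k"
    using A hS by (auto simp: dim_submatrix)
  have AA: "transpose_mat A * A \<in> carrier_mat n n" using A by auto
  show ?thesis
  proof (rule eq_matI)
    fix i j assume "i < dim_row (transpose_mat (submatrix A UNIV S) * submatrix A UNIV S)"
      "j < dim_col (transpose_mat (submatrix A UNIV S) * submatrix A UNIV S)"
    then have ij: "i < k" "j < k" using dB by auto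
    have "submatrix (transpose_mat A * A) S S $$ (i,j) = (transpose_mat A * A) $$ (pick S i, pick S j)"
      by (rule sub_idx[OF AA ij])
    also have "\<dots> = (\<Sum>l\<in>{0..<m}. A $$ (l, pick S i) * A $$ (l, pick S j))"
      using A pickS[OF ij(1)] pickS[OF ij(2)] by (auto simp: scalar_prod_def)
    also have "\<dots> = (transpose_mat (submatrix A UNIV S) * submatrix A UNIV S) $$ (i,j)"
      using A ij dB by (auto simp: scalar_prod_def submatrix_index pick_UNIV hS intro!: sum.cong)
    finally show "submatrix (transpose_mat A * A) S S $$ (i,j) = (transpose_mat (submatrix A UNIV S) * submatrix A UNIV S) $$ (i,j)" .
  qed (use dB A hS in \<open>auto simp: dim_submatrix\<close>)
qed

end

lemma outer_AbA:
  fixes A :: "real mat" and b :: "real vec"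
  assumes A: "A \<in> carrier_mat m n" and b: "b \<in> carrier_vec m"
  shows "transpose_mat A * outer b * A = outer (transpose_mat A *\<^sub>v b)"
proof -
  define B1 where "B1 = mat m 1 (\<lambda>(i,_). b $ i)"
  define D where "D = mat n 1 (\<lambda>(i,_). (transpose_mat A *\<^sub>v b) $ i)"
  have B1: "B1 \<in> carrier_mat m 1" unfolding B1_def by auto
  have ob: "outer b = B1 * transpose_mat B1"
    using b unfolding B1_def outer_def by (intro eq_matI, auto simp: scalar_prod_def)
  have cB: "col B1 0 = b" using b unfolding B1_def by (intro eq_vecI, auto)
  have AD: "transpose_mat A * B1 = D"
    using A B1 b cB unfolding D_def by (intro eq_matI, auto simp: row_transpose)
  have "transpose_mat A * outer b * A = (transpose_mat A * B1) * (transpose_mat B1 * A)"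
  proof -
    have AT: "transpose_mat A \<in> carrier_mat n m" using A by auto
    have BT: "transpose_mat B1 \<in> carrier_mat 1 m" using B1 by auto
    have "transpose_mat A * (B1 * transpose_mat B1) = (transpose_mat A * B1) * transpose_mat B1"
      by (rule assoc_mult_mat[OF AT B1 BT, symmetric])
    moreover have "(transpose_mat A * B1) * transpose_mat B1 * A = (transpose_mat A * B1) * (transpose_mat B1 * A)"
      by (rule assoc_mult_mat[of _ n 1 _ m _ n], use AT B1 BT A in auto)
    ultimately show ?thesis unfolding ob by simp
  qed
  also have "transpose_mat B1 * A = transpose_mat (transpose_mat A * B1)"
    using A B1 by (simp add: transpose_mult[of _ n m])
  also have "(transpose_mat A * B1) * transpose_mat (transpose_mat A * B1) = outer (transpose_mat A *\<^sub>v b)"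
    unfolding AD D_def outer_def using A b by (intro eq_matI, auto simp: scalar_prod_def)
  finally show ?thesis .
qed

theorem mainTheorem3:
  fixes A :: "real mat" and b :: "real vec" and m n k :: nat and a :: "nat set \<Rightarrow> real"
  assumes "A \<in> carrier_mat m n" and "b \<in> carrier_vec m"
    and "1 \<le> k" and "k \<le> n"
    and "is_lpm n k a" and "\<forall>S. a S \<ge> 0"
    and "lpm_eval n k a (transpose_mat A * A) \<noteq> 0"
  shows "is_largest_real_root
           (\<lambda>t. lpm_eval n k a (t \<cdot>\<^sub>m (transpose_mat A * A) - transpose_mat A * outer b * A))
           (lpm_eval n k a (transpose_mat A * (1\<^sub>m m + outer b) * A) / lpm_eval n k a (transpose_mat A * A) - 1)"
proof -
  note A = assms(1) and b = assms(2) and k = assms(3) and ann = assms(6) and P0 = assms(7)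
  define M where "M = transpose_mat A * A"
  define w where "w = transpose_mat A *\<^sub>v b"
  have Mc: "M \<in> carrier_mat n n" unfolding M_def using A by auto
  have wc: "w \<in> carrier_vec n" unfolding w_def using A b by auto
  have Oc: "outer w \<in> carrier_mat n n" using wc by simp
  have V: "transpose_mat A * outer b * A = outer w" unfolding w_def by (rule outer_AbA[OF A b])
  have W: "transpose_mat A * (1\<^sub>m m + outer b) * A = M + outer w"
  proof -
    have AT: "transpose_mat A \<in> carrier_mat n m" using A by auto
    have ob: "outer b \<in> carrier_mat m m" using b by simp
    have "transpose_mat A * (1\<^sub>m m + outer b) = transpose_mat A * 1\<^sub>m m + transpose_mat A * outer b"
      by (rule mult_add_distrib_mat[OF AT _ ob], auto)
    also have "transpose_mat A * 1\<^sub>m m = transpose_mat A" using AT by simp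
    finally have "transpose_mat A * (1\<^sub>m m + outer b) * A = (transpose_mat A + transpose_mat A * outer b) * A"
      by simp
    also have "\<dots> = transpose_mat A * A + transpose_mat A * outer b * A"
      by (rule add_mult_distrib_mat[OF AT _ A], use AT ob in auto)
    finally show ?thesis unfolding V M_def .
  qed
  define GS where "GS S = submatrix M S S" for S
  define wS where "wS S = vec k (\<lambda>i. w $ pick S i)" for S
  define cS where "cS S = det (GS S + outer (wS S)) - det (GS S)" for S
  have blk: "0 \<le> det (GS S) \<and> 0 \<le> cS S \<and>
      submatrix (M + outer w) S S = GS S + outer (wS S) \<and>
      (\<forall>t. det (submatrix (t \<cdot>\<^sub>m M - outer w) S S) = t ^ k * det (GS S) - t ^ (k - 1) * cS S)"
    if S: "S \<in> ksubsets n k" for S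
  proof -
    have hS: "card {i. i < n \<and> i \<in> S} = k" by (rule card_ksub[OF S])
    have G: "GS S \<in> carrier_mat k k" unfolding GS_def by (rule sub_carrier[OF hS Mc])
    have wSc: "wS S \<in> carrier_vec k" unfolding wS_def by simp
    have B: "submatrix A UNIV S \<in> carrier_mat m k" using A hS by (auto simp: dim_submatrix)
    have p: "psd k (GS S)" unfolding GS_def M_def sub_gram[OF hS A] by (rule psd_gram[OF B])
    note bf = block_facts[OF G wSc p k]
    have e1: "submatrix (M + outer w) S S = GS S + outer (wS S)"
      unfolding GS_def wS_def using sub_add[OF hS Mc Oc] sub_outer[OF hS wc] by simp
    have e2: "submatrix (t \<cdot>\<^sub>m M - outer w) S S = t \<cdot>\<^sub>m GS S - outer (wS S)" for t
      unfolding GS_def wS_def using sub_lin[OF hS Mc Oc] sub_outer[OF hS wc] by simp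
    show ?thesis using bf e1 e2 unfolding cS_def by simp
  qed
  define P where "P = lpm_eval n k a M"
  define C where "C = (\<Sum>S\<in>ksubsets n k. a S * cS S)"
  have PP: "P = (\<Sum>S\<in>ksubsets n k. a S * det (GS S))" unfolding P_def lpm_eval_def GS_def ..
  have Pnn: "0 \<le> P" unfolding PP using blk ann by (intro sum_nonneg, simp)
  have Ppos: "0 < P" using Pnn P0 unfolding P_def M_def by simp
  have Cnn: "0 \<le> C" unfolding C_def using blk ann by (intro sum_nonneg, simp)
  have LW: "lpm_eval n k a (M + outer w) = P + C"
  proof -
    have "lpm_eval n k a (M + outer w) = (\<Sum>S\<in>ksubsets n k. a S * det (GS S) + a S * cS S)"
      unfolding lpm_eval_def using blk by (intro sum.cong, auto simp: cS_def algebra_simps)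
    then show ?thesis unfolding PP C_def by (simp add: sum.distrib)
  qed
  have Lq: "lpm_eval n k a (t \<cdot>\<^sub>m M - outer w) = t ^ k * P - t ^ (k - 1) * C" for t
  proof -
    have "lpm_eval n k a (t \<cdot>\<^sub>m M - outer w) = (\<Sum>S\<in>ksubsets n k. t ^ k * (a S * det (GS S)) - t ^ (k - 1) * (a S * cS S))"
      unfolding lpm_eval_def
    proof (rule sum.cong[OF refl])
      fix S assume S: "S \<in> ksubsets n k"
      have "det (submatrix (t \<cdot>\<^sub>m M - outer w) S S) = t ^ k * det (GS S) - t ^ (k - 1) * cS S"
        using blk[OF S] by blast
      then show "a S * det (submatrix (t \<cdot>\<^sub>m M - outer w) S S) = t ^ k * (a S * det (GS S)) - t ^ (k - 1) * (a S * cS S)"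
        by (simp add: right_diff_distrib)
    qed
    then show ?thesis unfolding PP C_def by (simp add: sum_subtractf sum_distrib_left)
  qed
  define eta where "eta = C / P"
  have eta_eq: "lpm_eval n k a (transpose_mat A * (1\<^sub>m m + outer b) * A) / lpm_eval n k a (transpose_mat A * A) - 1 = eta"
    unfolding W LW M_def[symmetric] P_def[symmetric] eta_def using Ppos by (simp add: field_simps)
  have pw: "x ^ k = x * x ^ (k - 1)" for x :: real using k by (metis Suc_diff_le diff_Suc_1 power_Suc)
  have q: "lpm_eval n k a (t \<cdot>\<^sub>m (transpose_mat A * A) - transpose_mat A * outer b * A) = t ^ (k - 1) * (t * P - C)" for t
    unfolding V M_def[symmetric] Lq pw[of t] by (simp add: algebra_simps)
  show ?thesis
    unfolding eta_eq is_largest_real_root_def q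
  proof (intro conjI allI impI)
    show "eta ^ (k - 1) * (eta * P - C) = 0" unfolding eta_def using Ppos by simp
  next
    fix t assume "t ^ (k - 1) * (t * P - C) = 0"
    then have "t = 0 \<or> t * P - C = 0" by auto
    then show "t \<le> eta"
    proof
      assume "t = 0" then show ?thesis unfolding eta_def using Cnn Ppos by simp
    next
      assume "t * P - C = 0" then show ?thesis unfolding eta_def using Ppos by (simp add: field_simps)
    qed
  qed
qed

end
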